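(* Let $p$ be a prime and $a,b,c\ge0$ integers with $a,b<p$ and $c\le a+b$. Then: (1) $\deg f(a,b,c)=\min\{a,c\}$; (2) $v_t(f(a,b,c))=\max\{0,c-b\}$; (3) $v_{t-1}(f(a,b,c))=a+b-(p-1)$ if $a+b-(p-1)\le c\le p-1<a+b$, and $v_{t-1}(f(a,b,c))=0$ otherwise.
   Context: For non-negative integers $a,b,c$, $f(a,b,c)\in\overline{\mathbb{F}}_p[t]$ is the polynomial $f(a,b,c)=\sum_{i_2+i_3=c}\binom{a}{i_2}\binom{b}{i_3}t^{i_2}$ (binomial coefficients reduced mod $p$, $\binom{n}{i}=0$ for $i<0$ or $i>n$); equivalently the coefficient of $\lambda^c$ in $(1+\lambda t)^a(1+\lambda)^b$. $v_t$ and $v_{t-1}$ denote the orders of vanishing at $t=0$ and $t=1$. *)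

theory Defs
  imports "HOL-Computational_Algebra.Polynomial"
begin

definition fpoly :: "nat \<Rightarrow> nat \<Rightarrow> nat \<Rightarrow> 'a::field poly" where
  "fpoly a b c = (\<Sum>i2\<in>{0..c}. monom (of_nat ((a choose i2) * (b choose (c - i2)))) i2)"

end

theory Submission
  imports Defs
begin

lemma not_dvd_choose_small:
  fixes p n k :: nat
  assumes "prime p" "k \<le> n" "n < p"
  shows "\<not> p dvd (n choose k)"
proof
  assume "p dvd (n choose k)"
  moreover have "(n choose k) dvd fact n"
    using binomial_fact_lemma[OF assms(2)] by (metis dvd_triv_right)
  ultimately have "p dvd fact n" by (rule dvd_trans)
  with assms show False by (simp add: prime_dvd_fact_iff)
qed

lemma dvd_choose_mid:
  fixes p n k :: nat
  assumes "prime p" "k \<le> n" "k < p" "n - k < p" "p \<le> n"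
  shows "p dvd (n choose k)"
proof -
  have e: "fact k * fact (n - k) * (n choose k) = (fact n :: nat)"
    using binomial_fact_lemma[OF assms(2)] .
  have "p dvd fact n" using assms by (simp add: prime_dvd_fact_iff)
  hence "p dvd fact k * fact (n - k) * (n choose k)" using e by simp
  moreover have "\<not> p dvd fact k" "\<not> p dvd fact (n-k)" using assms by (simp_all add: prime_dvd_fact_iff)
  ultimately show ?thesis using assms(1) by (simp add: prime_dvd_mult_iff)
qed

lemma not_dvd_choose_big:
  fixes p n k :: nat
  assumes "prime p" "k \<le> n" "k < p" "p \<le> n - k" "n < 2 * p"
  shows "\<not> p dvd (n choose k)"
proof
  assume d: "p dvd (n choose k)"
  have e: "fact k * fact (n - k) * (n choose k) = (fact n :: nat)"
    using binomial_fact_lemma[OF assms(2)] .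
  have s: "fact n = (prod Suc {n - k..<n}) * (fact (n - k) :: nat)"
    using fact_split[OF assms(2), where 'a=nat] by simp
  have "fact k * (n choose k) = prod Suc {n - k..<n}"
    using e s by (metis (no_types, lifting) fact_nonzero mult.commute mult.left_commute mult_cancel_left)
  hence "p dvd prod Suc {n - k..<n}" using d by (metis dvd_mult)
  then obtain i where i: "i \<in> {n-k..<n}" "p dvd Suc i"
    using prime_dvd_prod_iff[OF _ assms(1)] by blast
  then obtain q where q: "Suc i = p * q" by (auto elim: dvdE)
  have "p < Suc i" "Suc i < 2 * p" using i assms by auto
  hence "p * 1 < p * q" "p * q < p * 2" using q by (simp_all add: mult.commute)
  hence "1 < q" "q < 2" by (simp_all only: mult_less_cancel1)
  thus False by simp
qed

lemma order_expansion:
  fixes d :: "nat \<Rightarrow> 'a::field" and x :: 'a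
  assumes "m \<le> n" "d m \<noteq> 0" "\<And>j. j < m \<Longrightarrow> d j = 0"
  shows "order x (\<Sum>j\<in>{0..n}. smult (d j) ([:-x,1:]^j)) = m"
proof -
  let ?q = "[:-x,1:]"
  define H where "H = (\<Sum>j\<in>{m..n}. smult (d j) (?q^(j-m)))"
  have "(\<Sum>j\<in>{0..n}. smult (d j) (?q^j)) = (\<Sum>j\<in>{m..n}. smult (d j) (?q^j))"
    by (rule sum.mono_neutral_right) (use assms in auto)
  also have "\<dots> = ?q^m * H" unfolding H_def sum_distrib_left
  proof (rule sum.cong)
    fix j assume "j \<in> {m..n}"
    hence "?q^j = ?q^m * ?q^(j-m)" by (simp add: power_add[symmetric])
    thus "smult (d j) (?q^j) = ?q^m * smult (d j) (?q^(j-m))" by simp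
  qed simp
  finally have eq: "(\<Sum>j\<in>{0..n}. smult (d j) (?q^j)) = ?q^m * H" .
  have "poly H x = (\<Sum>j\<in>{m..n}. d j * 0^(j-m))" unfolding H_def by (simp add: poly_sum)
  also have "\<dots> = (\<Sum>j\<in>{m..n}. if j = m then d m else 0)"
    by (rule sum.cong) auto
  also have "\<dots> = d m" using assms by simp
  finally have pH: "poly H x \<noteq> 0" using assms by simp
  hence "H \<noteq> 0" by auto
  hence "?q^m * H \<noteq> 0" by simp
  hence "order x (?q^m * H) = order x (?q^m) + order x H" by (rule order_mult)
  also have "\<dots> = m" using pH by (simp add: order_power_n_n order_0I)
  finally show ?thesis using eq by simp
qed

lemma degree_expansion:
  fixes e :: "nat \<Rightarrow> 'a::field"
  assumes "M \<le> n" "e M \<noteq> 0" "\<And>j. M < j \<Longrightarrow> j \<le> n \<Longrightarrow> e j = 0"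
  shows "degree (\<Sum>j\<in>{0..n}. monom (e j) j) = M"
proof (rule antisym)
  show "degree (\<Sum>j\<in>{0..n}. monom (e j) j) \<le> M"
  proof (rule degree_le, intro allI impI)
    fix i assume "M < i"
    thus "coeff (\<Sum>j\<in>{0..n}. monom (e j) j) i = 0"
      using assms by (auto simp: coeff_sum coeff_monom)
  qed
  have "coeff (\<Sum>j\<in>{0..n}. monom (e j) j) M = e M"
    using assms by (simp add: coeff_sum coeff_monom)
  thus "M \<le> degree (\<Sum>j\<in>{0..n}. monom (e j) j)" using assms by (metis le_degree)
qed

lemma coeff_lin_pow:
  fixes a b :: "'a::comm_semiring_1"
  shows "coeff ([:a, b:] ^ n) i = of_nat (n choose i) * b ^ i * a ^ (n - i)"
proof (cases "i \<le> n")
  case True thus ?thesis by (rule coeff_linear_poly_power)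
next
  case False
  have "degree ([:a, b:] ^ n) \<le> n"
    by (rule order.trans[OF degree_power_le]) (simp add: degree_pCons_le)
  thus ?thesis using False by (simp add: coeff_eq_0 binomial_eq_0)
qed


lemma fpoly_coeff:
  "fpoly a b c = coeff ([:1, [:0,1:]:]^a * [:1,1:]^b :: 'a::field poly poly) c"
  unfolding fpoly_def coeff_mult atLeast0AtMost
proof (rule sum.cong)
  fix i assume "i \<in> {..c}"
  show "monom (of_nat ((a choose i) * (b choose (c - i)))) i =
    coeff ([:1, [:0,1:]:]^a :: 'a poly poly) i * coeff ([:1, 1:] ^ b) (c - i)"
    by (simp add: coeff_lin_pow of_nat_poly monom_altdef mult_ac)
qed simp


lemma taylor_coeff:
  "coeff ([:1, [:0,1:]:]^a * [:1,1:]^b :: 'a::field poly poly) c =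
   (\<Sum>j\<in>{0..c}. smult (of_nat ((a choose j) * ((a+b-j) choose (c-j)))) ([:-1,1:]^j))"
proof -
  define S :: "'a poly" where "S = [:-1,1:]"
  define B :: "'a poly poly" where "B = [:1,1:]"
  have Bc: "\<And>n k. coeff (B^n) k = of_nat (n choose k)" by (simp add: B_def coeff_lin_pow)
  have A: "[:1, [:0,1:]:] = monom S 1 + B"
    by (simp add: S_def B_def monom_Suc monom_0 one_pCons)
  have "[:1, [:0,1:]:]^a * B^b = (\<Sum>k\<le>a. of_nat (a choose k) * monom S 1 ^ k * B^(a-k)) * B^b"
    unfolding A binomial_ring ..
  also have "\<dots> = (\<Sum>k\<le>a. monom (of_nat (a choose k) * S^k) k * B^(a+b-k))"
    unfolding sum_distrib_right
  proof (rule sum.cong)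
    fix k assume "k \<in> {..a}"
    hence "B^(a+b-k) = B^(a-k) * B^b" by (simp add: power_add[symmetric])
    thus "of_nat (a choose k) * monom S 1 ^ k * B ^ (a - k) * B ^ b = monom (of_nat (a choose k) * S ^ k) k * B ^ (a + b - k)"
      by (simp add: monom_power of_nat_poly smult_monom mult_ac)
  qed simp
  finally have P: "[:1, [:0,1:]:]^a * B^b = (\<Sum>k\<le>a. monom (of_nat (a choose k) * S^k) k * B^(a+b-k))" .
  have "coeff ([:1, [:0,1:]:]^a * B^b) c = (\<Sum>k\<le>a. if c < k then 0 else of_nat (a choose k) * S^k * of_nat ((a+b-k) choose (c-k)))"
    unfolding P coeff_sum coeff_monom_mult by (rule sum.cong) (simp_all only: Bc)
  also have "\<dots> = (\<Sum>k\<le>a+c. if c < k then 0 else of_nat (a choose k) * S^k * of_nat ((a+b-k) choose (c-k)))"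
    by (rule sum.mono_neutral_left) (auto simp: binomial_eq_0)
  also have "\<dots> = (\<Sum>k\<le>a+c. if c < k then 0 else smult (of_nat ((a choose k) * ((a+b-k) choose (c-k)))) (S^k))"
    by (rule sum.cong) (auto simp: of_nat_poly mult_ac)
  also have "\<dots> = (\<Sum>k\<le>c. smult (of_nat ((a choose k) * ((a+b-k) choose (c-k)))) (S^k))"
    by (rule sum.mono_neutral_cong_right) auto
  finally show ?thesis by (simp add: B_def S_def atLeast0AtMost)
qed


theorem lemmaA2:
  fixes p a b c :: nat
  assumes "prime p" and "CHAR('a::field) = p"
    and "a < p" and "b < p" and "c \<le> a + b"
  shows "degree (fpoly a b c :: 'a poly) = min a c
    \<and> order 0 (fpoly a b c :: 'a poly) = max 0 (c - b)
    \<and> order 1 (fpoly a b c :: 'a poly) =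
           (if int a + int b - (int p - 1) \<le> int c \<and> int c \<le> int p - 1 \<and> int p - 1 < int a + int b
            then a + b - (p - 1) else 0)"
proof -
  have nz: "\<And>n k. k \<le> n \<Longrightarrow> n < p \<Longrightarrow> (of_nat (n choose k) :: 'a) \<noteq> 0"
    using assms(1,2) not_dvd_choose_small by (simp add: of_nat_eq_0_iff_char_dvd)
  define e :: "nat \<Rightarrow> 'a" where "e i = of_nat ((a choose i) * (b choose (c - i)))" for i
  have F1: "(fpoly a b c :: 'a poly) = (\<Sum>j\<in>{0..c}. monom (e j) j)"
    unfolding fpoly_def e_def ..
  have F2: "(fpoly a b c :: 'a poly) = (\<Sum>j\<in>{0..c}. smult (e j) ([:-0,1:]^j))"
    unfolding F1 by (simp add: monom_altdef)
  have eI: "e i \<noteq> 0" if "i \<le> a" "c - i \<le> b" for i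
    using nz[of i a] nz[of "c - i" b] that assms by (simp add: e_def)
  have d1: "degree (fpoly a b c :: 'a poly) = min a c"
    unfolding F1
  proof (rule degree_expansion)
    show "e (min a c) \<noteq> 0" using assms by (intro eI) auto
    show "e j = 0" if "min a c < j" "j \<le> c" for j
      using that by (simp add: e_def binomial_eq_0)
  qed simp
  have d2: "order 0 (fpoly a b c :: 'a poly) = c - b"
    unfolding F2
  proof (rule order_expansion)
    show "e (c - b) \<noteq> 0" using assms by (intro eI) auto
    show "e j = 0" if "j < c - b" for j
      using that by (simp add: e_def binomial_eq_0)
  qed simp
  define g :: "nat \<Rightarrow> 'a" where "g j = of_nat ((a choose j) * ((a+b-j) choose (c-j)))" for j
  have F3: "(fpoly a b c :: 'a poly) = (\<Sum>j\<in>{0..c}. smult (g j) ([:-1,1:]^j))"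
    unfolding fpoly_coeff taylor_coeff g_def ..
  have d3: "order 1 (fpoly a b c :: 'a poly) =
           (if int a + int b - (int p - 1) \<le> int c \<and> int c \<le> int p - 1 \<and> int p - 1 < int a + int b
            then a + b - (p - 1) else 0)"
  proof (cases "int a + int b - (int p - 1) \<le> int c \<and> int c \<le> int p - 1 \<and> int p - 1 < int a + int b")
    case True
    define m where "m = a + b - (p - 1)"
    have "order 1 (fpoly a b c :: 'a poly) = m"
      unfolding F3
    proof (rule order_expansion)
      show "m \<le> c" using True unfolding m_def by linarith
      have "(of_nat (a choose m) :: 'a) \<noteq> 0" using assms True by (intro nz) (auto simp: m_def)
      moreover have "(of_nat ((a+b-m) choose (c-m)) :: 'a) \<noteq> 0" using assms True by (intro nz) (auto simp: m_def)
      ultimately show "g m \<noteq> 0" by (simp add: g_def)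
      show "g j = 0" if "j < m" for j
      proof -
        have "p dvd ((a+b-j) choose (c-j))"
          using assms True that by (intro dvd_choose_mid) (auto simp: m_def)
        hence "p dvd (a choose j) * ((a+b-j) choose (c-j))" by simp
        thus ?thesis unfolding g_def of_nat_eq_0_iff_char_dvd assms(2) .
      qed
    qed
    thus ?thesis using True by (simp add: m_def)
  next
    case False
    have "\<not> p dvd ((a+b) choose c)"
    proof (cases "a + b < p")
      case True thus ?thesis using assms not_dvd_choose_small by simp
    next
      case ab: False
      show ?thesis
      proof (cases "c < p")
        case True
        thus ?thesis using assms False ab by (intro not_dvd_choose_big) auto
      next
        case cp: False
        have "\<not> p dvd ((a+b) choose (a+b-c))"
          using assms False ab cp by (intro not_dvd_choose_big) auto
        thus ?thesis using assms(5) by (simp add: binomial_symmetric[symmetric])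
      qed
    qed
    hence "g 0 \<noteq> 0" using assms(2) by (simp add: g_def of_nat_eq_0_iff_char_dvd)
    hence "order 1 (fpoly a b c :: 'a poly) = 0"
      unfolding F3 by (intro order_expansion) auto
    thus ?thesis using False by simp
  qed
  show ?thesis using d1 d2 d3 by simp
qed

end
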